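(* Let $\mathrm{char}(K)=0$ and $k\ge2$ an integer. Then $\frac{d}{dx}\big(\mathrm{Exp}_k(x)\big)=\mathrm{Exp}_k(x)$; equivalently, writing $\mathrm{Exp}_k(x)=\sum_n f_n$ with $f_n$ homogeneous of degree $n$, one has $\frac{d}{dx}f_n=f_{n-1}$ for all $n\ge1$.
   Context: Let $K$ be a field and let $x\neq y$ be two symbols. A finite planar reduced rooted tree is a finite rooted tree in which the children of each vertex are linearly ordered and no vertex has exactly one child; its leaves are the vertices without children. $P(x,y)$ is the set of isomorphism classes of pairs $S=(T,\lambda)$, $T$ a finite planar reduced rooted tree, $\lambda:L(T)\to\{x,y\}$ a labeling of its leaves; $\deg_x(S)=\#\lambda^{-1}(x)$, $\deg(S)=\#L(T)$. $P'(x,y)=P(x,y)\cup\{1_P\}$ with $1_P$ the empty tree (degree $0$). For $m\ge2$, $\bullet_m(S_1,\dots,S_m)$ is the tree with a new root whose ordered children are the roots of $S_1,\dots,S_m$, labelings inherited; on $P'(x,y)$ occurrences of $1_P$ are deleted, with $\bullet_1(S)=S$, $\bullet_0()=1_P$. $K\{\{x,y\}$: all $f=\sum_{S\in P'(x,y)}c_S(f)S$ such that for each $n$ only finitely many $S$ with $\deg_x(S)=n$ have $c_S(f)\ne0$; products $f_1\cdot\ldots\cdot f_m=\bullet_m(f_1,\dots,f_m)$ with $c_S(f_1\cdot\ldots\cdot f_m)=\sum_{\bullet_m(S_1,\dots,S_m)=S}c_{S_1}(f_1)\cdots c_{S_m}(f_m)$; $x$-adic topology from $\mathrm{ord}_x(f)=\min\{\deg_x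 S:c_S(f)\ne0\}$. $K\{\{x\}\}$: series supported on $1_P$ and trees with all leaves labeled $x$. For $g,h\in K\{\{x,y\}$ with $\mathrm{ord}_x(g)\ge1$, $\varphi_{(g,h)}$ denotes the unique $x$-adically continuous $K$-linear map preserving $1_P$ and all $\bullet_m$ with $x\mapsto g$, $y\mapsto h$. The universal derivation $d:K\{\{x\}\}\to K\{\{x,y\}$ is the continuous $K$-linear map with $d(1_P)=0$ and, for a tree $S=(T,\lambda)$ with all leaves $l_1,\dots,l_m$ labeled $x$, $d(S)=\sum_{i=1}^m(T,\lambda^{(i)})$ with $\lambda^{(i)}$ labeling $l_i$ by $y$ and the other leaves by $x$. The derivative $\frac{d}{dx}:K\{\{x\}\}\to K\{\{x\}\}$ is $\psi\circ d$, where $\psi=\varphi_{(x,1_P)}$ (so $x\mapsto x$, $y\mapsto 1$); concretely, $\frac{d}{dx}S$ for a tree $S$ with $m$ leaves is the sum over its leaves of the tree obtained by deleting that leaf (via $\bullet$ with $1_P$ in that position). For $\mathrm{char}K=0$ and an integer $k\ge2$, the $k$-ary planar exponential series $\mathrm{Exp}_k(x)=\sum_{n\ge0}f_n\in K\{\{x\}\}$ ($f_n$ homogeneous of degree $n$, i.e. supported on trees with $n$ leaves) is the unique series with $f_0=1_P$, $f_1=x$ satisfying $k^nf_n=\sum_{i_1+\dots+i_k=n}f_{i_1}\cdot f_{i_2}\cdot\ldots\cdot f_{i_k}$ ($k$-ary products) for all $n$, i.e. $f(kx)=\bullet_k(f,\dots,f)$. *)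

theory Defs
  imports Main
begin

text \<open>Finite planar rooted trees; all leaves carry the label x (we only need K{{x}}).
  A tree is reduced if no vertex has exactly one child (and inner vertices have children).\<close>
datatype ptree = Lf | Nd "ptree list"

fun reduced :: "ptree \<Rightarrow> bool" where
  "reduced Lf = True"
| "reduced (Nd ts) = (2 \<le> length ts \<and> list_all reduced ts)"

fun nleaves :: "ptree \<Rightarrow> nat" where
  "nleaves Lf = 1"
| "nleaves (Nd ts) = sum_list (map nleaves ts)"

text \<open>Elements of P'(x): None is the empty tree 1_P, Some t a tree.\<close>
definition validP :: "ptree option \<Rightarrow> bool" where
  "validP S = (case S of None \<Rightarrow> True | Some t \<Rightarrow> reduced t)"

definition degP :: "ptree option \<Rightarrow> nat" where
  "degP S = (case S of None \<Rightarrow> 0 | Some t \<Rightarrow> nleaves t)"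

definition graft :: "ptree option list \<Rightarrow> ptree option" where
  "graft Ss = (let rs = [the S. S \<leftarrow> Ss, S \<noteq> None] in
     if rs = [] then None else if length rs = 1 then Some (hd rs) else Some (Nd rs))"

text \<open>Series: coefficient functions on P'(x).  Since there are only finitely many reduced
  trees with n leaves, any coefficient function supported on reduced trees is in K{{x}}.\<close>
type_synonym 'a series = "ptree option \<Rightarrow> 'a"

definition oneP :: "'a::zero_neq_one series" where
  "oneP = (\<lambda>S. if S = None then 1 else 0)"

definition xP :: "'a::zero_neq_one series" where
  "xP = (\<lambda>S. if S = Some Lf then 1 else 0)"

definition graft_series :: "'a::comm_semiring_1 series list \<Rightarrow> 'a series" where
  "graft_series fs S =
     (\<Sum>Ss\<in>{Ss. length Ss = length fs \<and> graft Ss = S}. \<Prod>i<length fs. (fs!i) (Ss!i))"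

text \<open>For a tree, the list (one entry per leaf, left to right) of the elements of P'(x)
  obtained by deleting that leaf (i.e. replacing it by 1_P via bullet).\<close>
function (sequential) del_leaf :: "ptree \<Rightarrow> ptree option list" where
  "del_leaf Lf = [None]"
| "del_leaf (Nd ts) =
     concat (map (\<lambda>(i, t). map (\<lambda>r. graft ((map Some ts)[i := r])) (del_leaf t))
                 (zip [0..<length ts] ts))"
  by pat_completeness auto
lemma size_in_list_le: "b \<in> set ts \<Longrightarrow> size b \<le> size_list size ts"
  by (induction ts) auto

termination
  by (relation "measure size") (auto dest!: set_zip_rightD simp: less_Suc_eq_le size_in_list_le)

text \<open>The derivative d/dx on K{{x}} (continuous linear extension of the tree-wise rule).\<close>
definition ddx :: "'a::comm_semiring_1 series \<Rightarrow> 'a series" where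
  "ddx g S' = (\<Sum>t\<in>{t. reduced t \<and> nleaves t = degP S' + 1}.
                 g (Some t) * of_nat (count_list (del_leaf t) S'))"

definition is_planar_Exp :: "nat \<Rightarrow> (nat \<Rightarrow> 'a::field_char_0 series) \<Rightarrow> bool" where
  "is_planar_Exp k f \<longleftrightarrow>
     f 0 = oneP \<and> f 1 = xP \<and>
     (\<forall>n S. f n S \<noteq> 0 \<longrightarrow> validP S \<and> degP S = n) \<and>
     (\<forall>n. (\<lambda>S. of_nat k ^ n * f n S) =
          (\<lambda>S. \<Sum>is\<in>{is. length is = k \<and> sum_list is = n}. graft_series (map f is) S))"

definition planar_Exp_comp :: "nat \<Rightarrow> nat \<Rightarrow> 'a::field_char_0 series" where
  "planar_Exp_comp k = (THE f. is_planar_Exp k f)"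

definition planar_Exp :: "nat \<Rightarrow> 'a::field_char_0 series" where
  "planar_Exp k = (\<lambda>S. planar_Exp_comp k (degP S) S)"

end

theory Submission
  imports Defs
begin


lemma rs_eq: "[the S. S \<leftarrow> Ss, S \<noteq> None] = map the (filter (\<lambda>S. S \<noteq> None) Ss)"
  by (induction Ss) auto

lemma graft_alt: "graft Ss = (let rs = map the (filter (\<lambda>S. S \<noteq> None) Ss) in
     if rs = [] then None else if length rs = 1 then Some (hd rs) else Some (Nd rs))"
  unfolding graft_def rs_eq ..

lemma graft_filter: "graft (filter (\<lambda>S. S \<noteq> None) Ss) = graft Ss"
  unfolding graft_alt by simp

lemma graft_None_Cons[simp]: "graft (None # Ss) = graft Ss"
  unfolding graft_alt by simp

lemma graft_single[simp]: "graft [r] = r"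
  unfolding graft_alt by (cases r) auto

lemma map_Some_the_filter: "map Some (map the (filter (\<lambda>S. S \<noteq> None) Ss)) = filter (\<lambda>S. S \<noteq> None) Ss"
  by (induction Ss) auto

lemma sum_degP_filter: "sum_list (map degP Ss) = sum_list (map nleaves (map the (filter (\<lambda>S. S \<noteq> None) Ss)))"
  by (induction Ss) (auto simp: degP_def split: option.split)

lemma degP_graft: "degP (graft Ss) = sum_list (map degP Ss)"
proof -
  define rs where "rs = map the (filter (\<lambda>S. S \<noteq> None) Ss)"
  have g: "graft Ss = (if rs = [] then None else if length rs = 1 then Some (hd rs) else Some (Nd rs))"
    unfolding graft_alt rs_def Let_def ..
  have s: "sum_list (map degP Ss) = sum_list (map nleaves rs)"
    unfolding rs_def by (rule sum_degP_filter)
  show ?thesis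
  proof (cases "rs = []")
    case True then show ?thesis using g s by (simp add: degP_def)
  next
    case False
    show ?thesis
    proof (cases "length rs = 1")
      case True
      then obtain t where "rs = [t]" by (cases rs) auto
      then show ?thesis using g s by (simp add: degP_def)
    next
      case False
      then show ?thesis using g s \<open>rs \<noteq> []\<close> by (simp add: degP_def)
    qed
  qed
qed

lemma validP_graft: "(\<And>S. S \<in> set Ss \<Longrightarrow> validP S) \<Longrightarrow> validP (graft Ss)"
proof -
  assume a: "\<And>S. S \<in> set Ss \<Longrightarrow> validP S"
  define rs where "rs = map the (filter (\<lambda>S. S \<noteq> None) Ss)"
  have g: "graft Ss = (if rs = [] then None else if length rs = 1 then Some (hd rs) else Some (Nd rs))"
    unfolding graft_alt rs_def Let_def ..
  have r: "list_all reduced rs" unfolding rs_def list_all_iff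
    by (auto dest!: a simp: validP_def)
  show ?thesis
  proof (cases "rs = []")
    case True then show ?thesis using g by (simp add: validP_def)
  next
    case False
    then have "length rs \<ge> 1" by (cases rs) auto
    then show ?thesis using g r False
      by (cases rs) (auto simp: validP_def Suc_le_eq)
  qed
qed

lemma reduced_pos: "reduced t \<Longrightarrow> nleaves t \<ge> 1"
proof (induction t)
  case Lf then show ?case by simp
next
  case (Nd ts)
  then have "ts \<noteq> []" by auto
  then have h: "hd ts \<in> set ts" by simp
  with Nd have "nleaves (hd ts) \<ge> 1" by (auto simp: list_all_iff)
  moreover have "nleaves (hd ts) \<le> sum_list (map nleaves ts)"
    using h by (intro member_le_sum_list) auto
  ultimately show ?case by simp
qed

lemma sum_list_update_nat: "i < length xs \<Longrightarrow> sum_list (xs[i := x]) + xs ! i = sum_list xs + (x::nat)"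
  by (induction xs arbitrary: i) (auto split: nat.splits)

lemma map_zip_upt: "map f (zip [0..<length ts] ts) = map (\<lambda>i. f (i, ts ! i)) [0..<length ts]"
  by (rule nth_equalityI) auto

lemma del_leaf_Nd_set: "r \<in> set (del_leaf (Nd ts)) \<longleftrightarrow>
   (\<exists>i<length ts. \<exists>r'\<in>set (del_leaf (ts ! i)). r = graft ((map Some ts)[i := r']))"
  by (auto simp: map_zip_upt)

lemma del_leaf_deg: "r \<in> set (del_leaf t) \<Longrightarrow> degP r + 1 = nleaves t"
proof (induction t arbitrary: r rule: del_leaf.induct)
  case 1 then show ?case by (simp add: degP_def)
next
  case (2 ts)
  from "2.prems" obtain i r' where i: "i < length ts" and r': "r' \<in> set (del_leaf (ts ! i))"
    and r: "r = graft ((map Some ts)[i := r'])" unfolding del_leaf_Nd_set by blast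
  have "(i, ts ! i) \<in> set (zip [0..<length ts] ts)" using i by (force simp: set_zip)
  then have ih: "degP r' + 1 = nleaves (ts ! i)" using "2.IH" r' by blast
  have "degP r = sum_list ((map degP (map Some ts))[i := degP r'])"
    using r by (simp add: degP_graft map_update)
  moreover have "sum_list ((map degP (map Some ts))[i := degP r']) + nleaves (ts ! i)
      = sum_list (map nleaves ts) + degP r'"
    using sum_list_update_nat[of i "map degP (map Some ts)" "degP r'"] i
    by (simp add: degP_def comp_def)
  ultimately show ?case using ih by simp
qed

lemma del_leaf_valid: "reduced t \<Longrightarrow> r \<in> set (del_leaf t) \<Longrightarrow> validP r"
proof (induction t arbitrary: r rule: del_leaf.induct)
  case 1 then show ?case by (simp add: validP_def)
next
  case (2 ts)
  from "2.prems" obtain i r' where i: "i < length ts" and r': "r' \<in> set (del_leaf (ts ! i))"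
    and r: "r = graft ((map Some ts)[i := r'])" unfolding del_leaf_Nd_set by blast
  have "(i, ts ! i) \<in> set (zip [0..<length ts] ts)" using i by (force simp: set_zip)
  moreover have "reduced (ts ! i)" using "2.prems" i by (auto simp: list_all_iff)
  ultimately have v: "validP r'" using "2.IH" r' by blast
  show ?case unfolding r
  proof (rule validP_graft)
    fix S assume "S \<in> set ((map Some ts)[i := r'])"
    then have "S = r' \<or> S \<in> set (map Some ts)" using set_update_subset_insert by fastforce
    then show "validP S" using v "2.prems" by (auto simp: validP_def list_all_iff)
  qed
qed



definition VN :: "nat \<Rightarrow> ptree set" where
  "VN N = {t. reduced t \<and> nleaves t \<le> N}"

definition WN :: "nat \<Rightarrow> ptree option set" where
  "WN N = insert None (Some ` VN N)"

lemma finite_VN: "finite (VN N)"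
proof (induction N)
  case 0
  have "VN 0 = {}" unfolding VN_def using reduced_pos by fastforce
  then show ?case by simp
next
  case (Suc N)
  have "VN (Suc N) \<subseteq> insert Lf (Nd ` {ts. set ts \<subseteq> VN N \<and> length ts \<le> Suc N})"
  proof
    fix t assume t: "t \<in> VN (Suc N)"
    show "t \<in> insert Lf (Nd ` {ts. set ts \<subseteq> VN N \<and> length ts \<le> Suc N})"
    proof (cases t)
      case Lf then show ?thesis by simp
    next
      case (Nd ts)
      have red: "2 \<le> length ts" "list_all reduced ts" and le: "sum_list (map nleaves ts) \<le> Suc N"
        using t Nd by (auto simp: VN_def)
      have "length ts \<le> sum_list (map nleaves ts)"
      proof -
        have "sum_list (map (\<lambda>_. 1::nat) ts) \<le> sum_list (map nleaves ts)"
          by (rule sum_list_mono) (use red reduced_pos in \<open>auto simp: list_all_iff\<close>)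
        then show ?thesis by (simp add: sum_list_triv)
      qed
      moreover have "set ts \<subseteq> VN N"
      proof
        fix u assume u: "u \<in> set ts"
        have "length (remove1 u ts) \<ge> 1" using red(1) u by (simp add: length_remove1)
        then have "remove1 u ts \<noteq> []" by auto
        then obtain v where v: "v \<in> set (remove1 u ts)" by (cases "remove1 u ts") auto
        then have "v \<in> set ts" by (meson notin_set_remove1)
        then have "nleaves v \<ge> 1" using red reduced_pos by (auto simp: list_all_iff)
        moreover have "nleaves v \<le> sum_list (map nleaves (remove1 u ts))"
          using v by (intro member_le_sum_list) auto
        moreover have "sum_list (map nleaves ts) = nleaves u + sum_list (map nleaves (remove1 u ts))"
          using u by (rule sum_list_map_remove1)
        ultimately have "nleaves u \<le> N" using le by linarith
        then show "u \<in> VN N" using u red by (auto simp: VN_def list_all_iff)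
      qed
      ultimately show ?thesis using Nd le by auto
    qed
  qed
  moreover have "finite (insert Lf (Nd ` {ts. set ts \<subseteq> VN N \<and> length ts \<le> Suc N}))"
    using Suc finite_lists_length_le by blast
  ultimately show ?case by (rule finite_subset)
qed

lemma finite_WN: "finite (WN N)"
  unfolding WN_def using finite_VN by simp

lemma finite_box: "finite {Ss. length Ss = m \<and> set Ss \<subseteq> WN N}"
  using finite_lists_length_eq[OF finite_WN, of N m] by (simp add: conj_commute)

definition Yset :: "ptree option \<Rightarrow> ptree option set" where
  "Yset S = insert None (insert S (Some ` (case S of Some (Nd ts) \<Rightarrow> set ts | _ \<Rightarrow> {})))"



lemma finite_Yset: "finite (Yset S)"
proof -
  have "finite (case S of Some (Nd ts) \<Rightarrow> set ts | _ \<Rightarrow> {})"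
    by (cases S; cases "the S") auto
  then show ?thesis unfolding Yset_def by simp
qed

lemma graft_set_Yset:
  assumes g: "graft Ss = S" and x: "x \<in> set Ss"
  shows "x \<in> Yset S"
proof -
  define rs where "rs = map the (filter (\<lambda>S. S \<noteq> None) Ss)"
  have gg: "graft Ss = (if rs = [] then None else if length rs = 1 then Some (hd rs) else Some (Nd rs))"
    unfolding graft_alt rs_def Let_def ..
  show "x \<in> Yset S"
  proof (cases x)
    case None then show ?thesis by (simp add: Yset_def)
  next
    case (Some u)
    then have u: "u \<in> set rs" unfolding rs_def using x by force
    show ?thesis
    proof (cases "length rs = 1")
      case True
      then have "rs = [u]" using u by (cases rs) auto
      then show ?thesis using gg g Some by (simp add: Yset_def)
    next
      case False
      then have "S = Some (Nd rs)" using gg g u by auto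
      then show ?thesis using Some u by (simp add: Yset_def)
    qed
  qed
qed

lemma finite_L: "finite {Ss. length Ss = m \<and> graft Ss = S}"
proof -
  have "{Ss. length Ss = m \<and> graft Ss = S} \<subseteq> {Ss. set Ss \<subseteq> Yset S \<and> length Ss = m}"
    using graft_set_Yset by blast
  then show ?thesis using finite_lists_length_eq[OF finite_Yset] finite_subset by blast
qed

lemma del_leaf_VN_WN: "t \<in> VN N \<Longrightarrow> r \<in> set (del_leaf t) \<Longrightarrow> r \<in> WN N"
proof -
  assume t: "t \<in> VN N" and r: "r \<in> set (del_leaf t)"
  have "validP r" using del_leaf_valid t r by (auto simp: VN_def)
  moreover have "degP r + 1 = nleaves t" using del_leaf_deg r .
  ultimately show ?thesis using t
    by (cases r) (auto simp: WN_def VN_def validP_def degP_def)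
qed



lemma ddx_box:
  assumes "degP S + 1 \<le> N"
  shows "ddx g S = (\<Sum>t\<in>VN N. g (Some t) * of_nat (count_list (del_leaf t) S))"
  unfolding ddx_def
proof (rule sum.mono_neutral_left)
  show "finite (VN N)" by (rule finite_VN)
  show "{t. reduced t \<and> nleaves t = degP S + 1} \<subseteq> VN N" using assms by (auto simp: VN_def)
  show "\<forall>i\<in>VN N - {t. reduced t \<and> nleaves t = degP S + 1}.
       g (Some i) * of_nat (count_list (del_leaf i) S) = 0"
  proof
    fix t assume "t \<in> VN N - {t. reduced t \<and> nleaves t = degP S + 1}"
    then have "S \<notin> set (del_leaf t)" using del_leaf_deg by (auto simp: VN_def)
    then show "g (Some t) * of_nat (count_list (del_leaf t) S) = 0"
      by (simp add: count_list_0_iff)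
  qed
qed

lemma ddx_valid: "ddx g S \<noteq> 0 \<Longrightarrow> validP S"
proof -
  assume "ddx g S \<noteq> 0"
  then obtain t where t: "reduced t" "g (Some t) * of_nat (count_list (del_leaf t) S) \<noteq> 0"
    unfolding ddx_def using sum.not_neutral_contains_not_neutral by blast
  have "S \<in> set (del_leaf t)"
  proof (rule ccontr)
    assume "S \<notin> set (del_leaf t)"
    then have "count_list (del_leaf t) S = 0" by (simp add: count_list_0_iff)
    then show False using t by simp
  qed
  then show ?thesis using del_leaf_valid t by blast
qed

lemma gs_box:
  fixes fs :: "'a::comm_semiring_1 series list"
  assumes v: "\<And>i S. i < length fs \<Longrightarrow> (fs!i) S \<noteq> 0 \<Longrightarrow> validP S" and d: "degP S \<le> N"
  shows "graft_series fs S = (\<Sum>Ss\<in>{Ss. length Ss = length fs \<and> set Ss \<subseteq> WN N}.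
            if graft Ss = S then (\<Prod>i<length fs. (fs!i) (Ss!i)) else 0)"
proof -
  let ?B = "{Ss. length Ss = length fs \<and> set Ss \<subseteq> WN N}"
  let ?L = "{Ss. length Ss = length fs \<and> graft Ss = S}"
  let ?w = "\<lambda>Ss. \<Prod>i<length fs. (fs!i) (Ss!i)"
  have "(\<Sum>Ss\<in>?B. if graft Ss = S then ?w Ss else 0) = (\<Sum>Ss\<in>?B \<inter> {Ss. graft Ss = S}. ?w Ss)"
    by (subst sum.inter_restrict[OF finite_box]) (simp add: of_bool_def)
  also have "?B \<inter> {Ss. graft Ss = S} = ?L \<inter> ?B" by auto
  also have "(\<Sum>Ss\<in>?L \<inter> ?B. ?w Ss) = (\<Sum>Ss\<in>?L. ?w Ss)"
  proof (rule sum.mono_neutral_left)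
    show "finite ?L" by (rule finite_L)
    show "?L \<inter> ?B \<subseteq> ?L" by blast
    show "\<forall>Ss\<in>?L - ?L \<inter> ?B. ?w Ss = 0"
    proof (rule ballI, rule ccontr)
      fix Ss assume Ss: "Ss \<in> ?L - ?L \<inter> ?B" and w: "?w Ss \<noteq> 0"
      have "set Ss \<subseteq> WN N"
      proof
        fix x assume "x \<in> set Ss"
        then obtain i where i: "i < length Ss" "x = Ss ! i" by (auto simp: in_set_conv_nth)
        have "(fs!i) x \<noteq> 0"
        proof
          assume "(fs!i) x = 0"
          then have "?w Ss = 0" using i Ss by (intro prod_zero bexI[of _ i]) auto
          then show False using w by simp
        qed
        then have vx: "validP x" using v i Ss by auto
        have "degP x \<le> sum_list (map degP Ss)"
          using i by (intro member_le_sum_list) auto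
        also have "\<dots> = degP S" using Ss degP_graft by auto
        finally show "x \<in> WN N" using vx d
          by (cases x) (auto simp: WN_def VN_def validP_def degP_def)
      qed
      then show False using Ss by auto
    qed
  qed
  finally show ?thesis unfolding graft_series_def by simp
qed



fun dlo :: "ptree option \<Rightarrow> ptree option list" where
  "dlo None = []"
| "dlo (Some t) = del_leaf t"

definition EH :: "(ptree option list \<Rightarrow> 'b) \<Rightarrow> ptree option list \<Rightarrow> 'b list" where
  "EH H Ss = concat (map (\<lambda>j. map (\<lambda>r. H (Ss[j:=r])) (dlo (Ss!j))) [0..<length Ss])"

definition E0 :: "(ptree option list \<Rightarrow> 'b) \<Rightarrow> ptree list \<Rightarrow> 'b list" where
  "E0 H ts = concat (map (\<lambda>(i, t). map (\<lambda>r. H ((map Some ts)[i := r])) (del_leaf t))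
                 (zip [0..<length ts] ts))"

lemma EH_Nil[simp]: "EH H [] = []" by (simp add: EH_def)

lemma EH_Cons: "EH H (S # Ss) = map (\<lambda>r. H (r # Ss)) (dlo S) @ EH (\<lambda>X. H (S # X)) Ss"
proof -
  have "[0..<length (S # Ss)] = 0 # map Suc [0..<length Ss]"
    by (simp add: upt_conv_Cons map_Suc_upt del: upt_Suc)
  then show ?thesis unfolding EH_def by (simp add: comp_def)
qed

lemma E0_Nil[simp]: "E0 H [] = []" by (simp add: E0_def)

lemma E0_Cons: "E0 H (t # ts) = map (\<lambda>r. H (r # map Some ts)) (del_leaf t) @ E0 (\<lambda>X. H (Some t # X)) ts"
proof -
  have "[0..<length (t # ts)] = 0 # map Suc [0..<length ts]"
    by (simp add: upt_conv_Cons map_Suc_upt del: upt_Suc)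
  then show ?thesis unfolding E0_def by (simp add: zip_map1 comp_def split_def)
qed

definition finv :: "(ptree option list \<Rightarrow> 'b) \<Rightarrow> bool" where
  "finv H \<longleftrightarrow> (\<forall>X. H X = H (filter (\<lambda>S. S \<noteq> None) X))"

lemma finvD: "finv H \<Longrightarrow> H (filter (\<lambda>S. S \<noteq> None) X) = H X"
  unfolding finv_def by (erule allE[of _ X]) (erule sym)

lemma EH_E0: "finv H \<Longrightarrow> EH H Ss = E0 H (map the (filter (\<lambda>S. S \<noteq> None) Ss))"
proof (induction Ss arbitrary: H)
  case Nil then show ?case by simp
next
  case (Cons S Ss)
  show ?case
  proof (cases S)
    case None
    have "(\<lambda>X. H (None # X)) = H"
    proof
      fix X
      have "H (None # X) = H (filter (\<lambda>S. S \<noteq> None) (None # X))" by (rule finvD[OF Cons.prems, symmetric])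
      also have "\<dots> = H (filter (\<lambda>S. S \<noteq> None) X)" by simp
      also have "\<dots> = H X" using finvD[OF Cons.prems] by simp
      finally show "H (None # X) = H X" .
    qed
    then show ?thesis using None Cons by (simp add: EH_Cons)
  next
    case (Some t)
    let ?H = "\<lambda>X. H (Some t # X)"
    have fi: "finv ?H" unfolding finv_def
    proof
      fix X
      have "H (Some t # X) = H (filter (\<lambda>S. S \<noteq> None) (Some t # X))" by (rule finvD[OF Cons.prems, symmetric])
      also have "\<dots> = H (Some t # filter (\<lambda>S. S \<noteq> None) X)" by simp
      finally show "H (Some t # X) = H (Some t # filter (\<lambda>S. S \<noteq> None) X)" .
    qed
    have eq: "H (r # Ss) = H (r # map Some (map the (filter (\<lambda>S. S \<noteq> None) Ss)))" for r
    proof -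
      have "H (r # Ss) = H (filter (\<lambda>S. S \<noteq> None) (r # Ss))" by (rule finvD[OF Cons.prems, symmetric])
      moreover have "H (r # map Some (map the (filter (\<lambda>S. S \<noteq> None) Ss)))
          = H (filter (\<lambda>S. S \<noteq> None) (r # map Some (map the (filter (\<lambda>S. S \<noteq> None) Ss))))"
        by (rule finvD[OF Cons.prems, symmetric])
      moreover have "filter (\<lambda>S. S \<noteq> None) (r # map Some (map the (filter (\<lambda>S. S \<noteq> None) Ss)))
          = filter (\<lambda>S. S \<noteq> None) (r # Ss)"
        unfolding map_Some_the_filter by simp
      ultimately show ?thesis by simp
    qed
    show ?thesis using Some Cons.IH[OF fi] by (simp add: EH_Cons E0_Cons eq)
  qed
qed

lemma finv_graft: "finv graft"
  unfolding finv_def using graft_filter by simp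

lemma EH_graft: "EH graft Ss = (case graft Ss of None \<Rightarrow> [] | Some t \<Rightarrow> del_leaf t)"
proof -
  define rs where "rs = map the (filter (\<lambda>S. S \<noteq> None) Ss)"
  have g: "graft Ss = (if rs = [] then None else if length rs = 1 then Some (hd rs) else Some (Nd rs))"
    unfolding graft_alt rs_def Let_def ..
  have e: "EH graft Ss = E0 graft rs" unfolding rs_def by (rule EH_E0[OF finv_graft])
  show ?thesis
  proof (cases "rs = []")
    case True then show ?thesis using g e by simp
  next
    case False
    show ?thesis
    proof (cases "length rs = 1")
      case True
      then obtain t where "rs = [t]" by (cases rs) auto
      then show ?thesis using g e by (simp add: E0_Cons)
    next
      case False
      then show ?thesis using g e \<open>rs \<noteq> []\<close> by (simp add: E0_def)
    qed
  qed
qed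

lemma count_list_concat: "count_list (concat xss) y = sum_list (map (\<lambda>xs. count_list xs y) xss)"
  by (induction xss) auto

lemma sum_upt_list: "(\<Sum>j<n. f j) = sum_list (map f [0..<n])"
  by (induction n) auto

lemma count_EH: "count_list (EH graft Ss) y =
    (\<Sum>j<length Ss. count_list (map (\<lambda>r. graft (Ss[j:=r])) (dlo (Ss!j))) y)"
  unfolding EH_def count_list_concat sum_upt_list by (simp add: comp_def)

lemma of_nat_count: "(of_nat (count_list xs y) :: 'a::semiring_1) = sum_list (map (\<lambda>r. if r = y then 1 else 0) xs)"
  by (induction xs) auto

lemma sum_list_as_count:
  fixes h :: "'b \<Rightarrow> 'a::comm_semiring_1"
  assumes "finite W" "set L \<subseteq> W"
  shows "sum_list (map h L) = (\<Sum>x\<in>W. of_nat (count_list L x) * h x)"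
  using assms(2)
proof (induction L)
  case Nil then show ?case by simp
next
  case (Cons a L)
  then have a: "a \<in> W" by simp
  have "(\<Sum>x\<in>W. of_nat (count_list (a # L) x) * h x)
      = (\<Sum>x\<in>W. of_nat (count_list L x) * h x) + (\<Sum>x\<in>W. if a = x then h x else 0)"
    by (simp add: sum.distrib[symmetric]) (rule sum.cong, auto simp: algebra_simps)
  also have "(\<Sum>x\<in>W. if a = x then h x else 0) = h a" using a assms(1) by (simp add: sum.delta)
  finally show ?case using Cons.IH Cons.prems by (simp add: add.commute)
qed



lemma w_nz_valid:
  fixes fs :: "'a::comm_semiring_1 series list"
  assumes v: "\<And>i S. i < length fs \<Longrightarrow> (fs!i) S \<noteq> 0 \<Longrightarrow> validP S"
    and len: "length Ss = length fs" and w: "(\<Prod>i<length fs. (fs!i) (Ss!i)) \<noteq> 0"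
    and x: "x \<in> set Ss"
  shows "validP x"
proof -
  obtain i where i: "i < length Ss" "x = Ss ! i" using x by (auto simp: in_set_conv_nth)
  have "(fs!i) x \<noteq> 0"
  proof
    assume "(fs!i) x = 0"
    then have "(\<Prod>i<length fs. (fs!i) (Ss!i)) = 0" using i len by (intro prod_zero bexI[of _ i]) auto
    then show False using w by simp
  qed
  then show ?thesis using v i len by auto
qed

lemma deriv_j:
  fixes fs :: "'a::comm_semiring_1 series list"
  assumes v: "\<And>i S. i < length fs \<Longrightarrow> (fs!i) S \<noteq> 0 \<Longrightarrow> validP S" and j: "j < length fs"
  shows "(\<Sum>Ss\<in>{Ss. length Ss = length fs \<and> set Ss \<subseteq> WN (degP S' + 1)}.
            (\<Prod>i<length fs. (fs!i)(Ss!i)) * of_nat (count_list (map (\<lambda>r. graft (Ss[j:=r])) (dlo (Ss!j))) S'))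
         = graft_series (fs[j := ddx (fs!j)]) S'"
proof -
  define m where "m = length fs"
  define N where "N = degP S' + 1"
  define B where "B = {Ss. length Ss = m \<and> set Ss \<subseteq> WN N}"
  define W where "W = WN N"
  define V where "V = VN N"
  define P where "P X = (\<Prod>i\<in>{..<m}-{j}. (fs!i) (X!i))" for X
  define Bj where "Bj = {Ss\<in>B. Ss!j \<noteq> None}"
  have jm: "j < m" using j m_def by simp
  have finB: "finite B" unfolding B_def by (rule finite_box)
  have finW: "finite W" unfolding W_def by (rule finite_WN)
  have finV: "finite V" unfolding V_def by (rule finite_VN)
  have finBj: "finite Bj" using finB unfolding Bj_def by simp
  have wP: "(\<Prod>i<m. (fs!i) (X!i)) = P X * (fs!j) (X!j)" for X
    using jm by (simp add: P_def prod.remove[of "{..<m}" j] mult.commute)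
  have w2: "(\<Prod>i<m. ((fs[j:=g])!i) (X!i)) = P X * g (X!j)" for X g
  proof -
    have "(\<Prod>i<m. ((fs[j:=g])!i) (X!i)) = ((fs[j:=g])!j) (X!j) * (\<Prod>i\<in>{..<m}-{j}. ((fs[j:=g])!i) (X!i))"
      using jm by (simp add: prod.remove[of "{..<m}" j])
    also have "(\<Prod>i\<in>{..<m}-{j}. ((fs[j:=g])!i) (X!i)) = P X"
      unfolding P_def by (rule prod.cong) auto
    finally show ?thesis using jm m_def by (simp add: mult.commute)
  qed
  have Pupd: "P (X[j:=a]) = P X" for X a
    unfolding P_def by (rule prod.cong) auto
  define R where "R Ss' t = (if graft Ss' = S' then P Ss' * ((fs!j) (Some t) * of_nat (count_list (del_leaf t) (Ss'!j))) else 0)" for Ss' t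
  define Q where "Q Ss x = (if graft (Ss[j:=x]) = S' then P Ss * ((fs!j) (Ss!j) * of_nat (count_list (del_leaf (the (Ss!j))) x)) else 0)" for Ss x
  have vupd: "i < length (fs[j := ddx (fs!j)]) \<Longrightarrow> ((fs[j := ddx (fs!j)])!i) S \<noteq> 0 \<Longrightarrow> validP S" for i S
    using v ddx_valid by (cases "i = j") auto
  have "graft_series (fs[j := ddx (fs!j)]) S' = (\<Sum>Ss\<in>{Ss. length Ss = length (fs[j := ddx (fs!j)]) \<and> set Ss \<subseteq> WN N}.
      if graft Ss = S' then (\<Prod>i<length (fs[j := ddx (fs!j)]). ((fs[j := ddx (fs!j)])!i) (Ss!i)) else 0)"
    by (rule gs_box) (erule vupd, assumption, simp add: N_def)
  also have "\<dots> = (\<Sum>Ss'\<in>B. if graft Ss' = S' then (\<Prod>i<m. ((fs[j := ddx (fs!j)])!i) (Ss'!i)) else 0)"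
    unfolding B_def m_def length_list_update ..
  also have "\<dots> = (\<Sum>Ss'\<in>B. \<Sum>t\<in>V. R Ss' t)"
  proof (rule sum.cong[OF refl])
    fix Ss' assume Ss': "Ss' \<in> B"
    show "(if graft Ss' = S' then (\<Prod>i<m. ((fs[j := ddx (fs!j)])!i) (Ss'!i)) else 0) = (\<Sum>t\<in>V. R Ss' t)"
    proof (cases "graft Ss' = S'")
      case True
      have "degP (Ss'!j) \<le> sum_list (map degP Ss')"
        using Ss' jm by (intro member_le_sum_list) (auto simp: B_def)
      also have "\<dots> = degP S'" using True degP_graft by metis
      finally have "degP (Ss'!j) + 1 \<le> N" by (simp add: N_def)
      then have "ddx (fs!j) (Ss'!j) = (\<Sum>t\<in>V. (fs!j) (Some t) * of_nat (count_list (del_leaf t) (Ss'!j)))"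
        unfolding V_def by (rule ddx_box)
      then show ?thesis using True by (simp add: w2 R_def sum_distrib_left)
    next
      case False then show ?thesis by (simp add: R_def)
    qed
  qed
  also have "\<dots> = (\<Sum>p\<in>B \<times> V. R (fst p) (snd p))"
    by (simp add: sum.cartesian_product split_def)
  also have "\<dots> = (\<Sum>q\<in>Bj \<times> W. Q (fst q) (snd q))"
  proof (rule sum.reindex_bij_witness[where i = "\<lambda>(Ss, x). (Ss[j:=x], the (Ss!j))"
                                       and j = "\<lambda>(Ss', t). (Ss'[j:=Some t], Ss'!j)"])
    fix a assume a: "a \<in> B \<times> V"
    obtain Ss' t where at: "a = (Ss', t)" by (cases a)
    have len: "length Ss' = m" using a at by (auto simp: B_def)
    show "(\<lambda>(Ss, x). (Ss[j:=x], the (Ss!j))) ((\<lambda>(Ss', t). (Ss'[j:=Some t], Ss'!j)) a) = a"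
      using at len jm by simp
    show "(\<lambda>(Ss', t). (Ss'[j:=Some t], Ss'!j)) a \<in> Bj \<times> W"
    proof -
      have "set (Ss'[j:=Some t]) \<subseteq> W"
        using a at set_update_subset_insert[of Ss' j "Some t"] by (auto simp: B_def W_def WN_def V_def)
      moreover have "Ss'!j \<in> W" using a at len jm by (auto simp: B_def W_def)
      ultimately show ?thesis using at len jm by (auto simp: Bj_def B_def W_def)
    qed
    show "Q (fst ((\<lambda>(Ss', t). (Ss'[j:=Some t], Ss'!j)) a)) (snd ((\<lambda>(Ss', t). (Ss'[j:=Some t], Ss'!j)) a))
        = R (fst a) (snd a)"
      using at len jm by (simp add: Q_def R_def Pupd)
  next
    fix b assume b: "b \<in> Bj \<times> W"
    obtain Ss x where bt: "b = (Ss, x)" by (cases b)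
    have len: "length Ss = m" and nn: "Ss!j \<noteq> None" and xW: "x \<in> W" and sW: "set Ss \<subseteq> W"
      using b bt by (auto simp: Bj_def B_def W_def)
    show "(\<lambda>(Ss', t). (Ss'[j:=Some t], Ss'!j)) ((\<lambda>(Ss, x). (Ss[j:=x], the (Ss!j))) b) = b"
      using bt len jm nn by simp
    show "(\<lambda>(Ss, x). (Ss[j:=x], the (Ss!j))) b \<in> B \<times> V"
    proof -
      have "set (Ss[j:=x]) \<subseteq> W" using sW xW set_update_subset_insert[of Ss j x] by auto
      moreover have "Ss!j \<in> set Ss" using len jm by simp
      then have "Ss!j \<in> W" using sW by blast
      then have "the (Ss!j) \<in> V" using nn by (auto simp: W_def WN_def V_def)
      ultimately show ?thesis using bt len by (auto simp: B_def W_def)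
    qed
  qed
  also have "\<dots> = (\<Sum>Ss\<in>Bj. \<Sum>x\<in>W. Q Ss x)"
    by (simp add: sum.cartesian_product split_def)
  also have "\<dots> = (\<Sum>Ss\<in>Bj. (\<Prod>i<m. (fs!i)(Ss!i)) * of_nat (count_list (map (\<lambda>r. graft (Ss[j:=r])) (dlo (Ss!j))) S'))"
  proof (rule sum.cong[OF refl])
    fix Ss assume Ss: "Ss \<in> Bj"
    obtain t where t: "Ss!j = Some t" using Ss by (auto simp: Bj_def)
    have len: "length Ss = m" using Ss by (auto simp: Bj_def B_def)
    have "Ss!j \<in> set Ss" using len jm by simp
    then have "Ss!j \<in> W" using Ss by (auto simp: Bj_def B_def W_def)
    then have tV: "t \<in> V" using t by (auto simp: W_def WN_def V_def)
    have sub: "set (del_leaf t) \<subseteq> W" using del_leaf_VN_WN tV by (auto simp: W_def V_def)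
    have "(of_nat (count_list (map (\<lambda>r. graft (Ss[j:=r])) (del_leaf t)) S') :: 'a)
        = sum_list (map (\<lambda>r. if graft (Ss[j:=r]) = S' then 1 else 0) (del_leaf t))"
      by (simp add: of_nat_count comp_def)
    also have "\<dots> = (\<Sum>x\<in>W. of_nat (count_list (del_leaf t) x) * (if graft (Ss[j:=x]) = S' then 1 else 0))"
      by (rule sum_list_as_count[OF finW sub])
    finally have c: "(of_nat (count_list (map (\<lambda>r. graft (Ss[j:=r])) (del_leaf t)) S') :: 'a)
        = (\<Sum>x\<in>W. of_nat (count_list (del_leaf t) x) * (if graft (Ss[j:=x]) = S' then 1 else 0))" .
    show "(\<Sum>x\<in>W. Q Ss x) = (\<Prod>i<m. (fs!i)(Ss!i)) * of_nat (count_list (map (\<lambda>r. graft (Ss[j:=r])) (dlo (Ss!j))) S')"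
      unfolding wP t dlo.simps c sum_distrib_left
      by (rule sum.cong[OF refl]) (simp add: Q_def t ac_simps)
  qed
  also have "\<dots> = (\<Sum>Ss\<in>B. (\<Prod>i<m. (fs!i)(Ss!i)) * of_nat (count_list (map (\<lambda>r. graft (Ss[j:=r])) (dlo (Ss!j))) S'))"
  proof (rule sum.mono_neutral_left[OF finB])
    show "Bj \<subseteq> B" unfolding Bj_def by auto
    show "\<forall>Ss\<in>B - Bj. (\<Prod>i<m. (fs!i)(Ss!i)) * of_nat (count_list (map (\<lambda>r. graft (Ss[j:=r])) (dlo (Ss!j))) S') = 0"
      unfolding Bj_def by auto
  qed
  finally show ?thesis unfolding B_def m_def N_def by simp
qed



lemma deriv_graft:
  fixes fs :: "'a::comm_semiring_1 series list"
  assumes v: "\<And>i S. i < length fs \<Longrightarrow> (fs!i) S \<noteq> 0 \<Longrightarrow> validP S"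
  shows "ddx (graft_series fs) S' = (\<Sum>j<length fs. graft_series (fs[j := ddx (fs!j)]) S')"
proof -
  define m where "m = length fs"
  define N where "N = degP S' + 1"
  define B where "B = {Ss. length Ss = m \<and> set Ss \<subseteq> WN N}"
  define V where "V = VN N"
  define w where "w Ss = (\<Prod>i<m. (fs!i) (Ss!i))" for Ss
  have finB: "finite B" unfolding B_def by (rule finite_box)
  have finV: "finite V" unfolding V_def by (rule finite_VN)
  have "ddx (graft_series fs) S' = (\<Sum>t\<in>V. graft_series fs (Some t) * of_nat (count_list (del_leaf t) S'))"
    unfolding V_def by (rule ddx_box) (simp add: N_def)
  also have "\<dots> = (\<Sum>t\<in>V. \<Sum>Ss\<in>B. if graft Ss = Some t then w Ss * of_nat (count_list (del_leaf t) S') else 0)"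
  proof (rule sum.cong[OF refl])
    fix t assume t: "t \<in> V"
    have "graft_series fs (Some t) = (\<Sum>Ss\<in>B. if graft Ss = Some t then w Ss else 0)"
      unfolding B_def w_def m_def
      by (rule gs_box) (erule v, assumption, use t in \<open>simp add: V_def VN_def degP_def\<close>)
    then show "graft_series fs (Some t) * of_nat (count_list (del_leaf t) S')
        = (\<Sum>Ss\<in>B. if graft Ss = Some t then w Ss * of_nat (count_list (del_leaf t) S') else 0)"
      by (simp add: sum_distrib_right) (rule sum.cong, auto)
  qed
  also have "\<dots> = (\<Sum>Ss\<in>B. \<Sum>t\<in>V. if graft Ss = Some t then w Ss * of_nat (count_list (del_leaf t) S') else 0)"
    by (rule sum.swap)
  also have "\<dots> = (\<Sum>Ss\<in>B. w Ss * of_nat (count_list (EH graft Ss) S'))"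
  proof (rule sum.cong[OF refl])
    fix Ss assume Ss: "Ss \<in> B"
    show "(\<Sum>t\<in>V. if graft Ss = Some t then w Ss * of_nat (count_list (del_leaf t) S') else 0)
        = w Ss * of_nat (count_list (EH graft Ss) S')"
    proof (cases "graft Ss")
      case None then show ?thesis by (simp add: EH_graft)
    next
      case (Some t0)
      have "(\<Sum>t\<in>V. if graft Ss = Some t then w Ss * of_nat (count_list (del_leaf t) S') else 0)
          = (if t0 \<in> V then w Ss * of_nat (count_list (del_leaf t0) S') else 0)"
        using Some finV by (simp add: sum.delta)
      also have "\<dots> = w Ss * of_nat (count_list (del_leaf t0) S')"
      proof (cases "t0 \<in> V \<or> w Ss = 0")
        case True then show ?thesis by auto
      next
        case False
        have "\<forall>x\<in>set Ss. validP x"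
          using w_nz_valid[OF v] False Ss by (auto simp: w_def B_def m_def)
        then have "validP (graft Ss)" using validP_graft by blast
        then have "reduced t0" using Some by (simp add: validP_def)
        then have "nleaves t0 \<noteq> N" using False by (auto simp: V_def VN_def)
        then have "S' \<notin> set (del_leaf t0)" using del_leaf_deg N_def by fastforce
        then show ?thesis using False by (simp add: count_list_0_iff)
      qed
      finally show ?thesis using Some by (simp add: EH_graft)
    qed
  qed
  also have "\<dots> = (\<Sum>Ss\<in>B. \<Sum>j<m. w Ss * of_nat (count_list (map (\<lambda>r. graft (Ss[j:=r])) (dlo (Ss!j))) S'))"
  proof (rule sum.cong[OF refl])
    fix Ss assume "Ss \<in> B"
    then have "length Ss = m" by (simp add: B_def)
    then show "w Ss * of_nat (count_list (EH graft Ss) S')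
        = (\<Sum>j<m. w Ss * of_nat (count_list (map (\<lambda>r. graft (Ss[j:=r])) (dlo (Ss!j))) S'))"
      by (simp add: count_EH sum_distrib_left)
  qed
  also have "\<dots> = (\<Sum>j<m. \<Sum>Ss\<in>B. w Ss * of_nat (count_list (map (\<lambda>r. graft (Ss[j:=r])) (dlo (Ss!j))) S'))"
    by (rule sum.swap)
  also have "\<dots> = (\<Sum>j<m. graft_series (fs[j := ddx (fs!j)]) S')"
  proof (rule sum.cong[OF refl])
    fix j assume "j \<in> {..<m}"
    then have j: "j < length fs" by (simp add: m_def)
    show "(\<Sum>Ss\<in>B. w Ss * of_nat (count_list (map (\<lambda>r. graft (Ss[j:=r])) (dlo (Ss!j))) S'))
        = graft_series (fs[j := ddx (fs!j)]) S'"
      using deriv_j[OF v j, where S'=S'] unfolding B_def w_def m_def N_def by simp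
  qed
  finally show ?thesis by (simp add: m_def)
qed



definition Cs :: "nat \<Rightarrow> nat \<Rightarrow> nat list set" where
  "Cs k n = {cs. length cs = k \<and> sum_list cs = n}"

definition Cp :: "nat \<Rightarrow> nat \<Rightarrow> nat list set" where
  "Cp k n = {cs. length cs = k \<and> sum_list cs = n \<and> (\<forall>i\<in>set cs. i < n)}"

definition conc :: "nat \<Rightarrow> nat \<Rightarrow> nat \<Rightarrow> nat list" where
  "conc k j n = (replicate k 0)[j := n]"

lemma finite_Cs: "finite (Cs k n)"
proof -
  have "Cs k n \<subseteq> {cs. set cs \<subseteq> {..n} \<and> length cs = k}"
    unfolding Cs_def using member_le_sum_list by fastforce
  then show ?thesis using finite_lists_length_eq[of "{..n}" k] finite_subset by blast
qed

lemma finite_Cp: "finite (Cp k n)"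
  using finite_Cs[of k n] by (rule finite_subset[rotated]) (auto simp: Cs_def Cp_def)

lemma sum_list_conc: "j < k \<Longrightarrow> sum_list (conc k j n) = n"
  using sum_list_update_nat[of j "replicate k 0" n] by (simp add: conc_def)

lemma conc_nth: "j < k \<Longrightarrow> i < k \<Longrightarrow> conc k j n ! i = (if i = j then n else 0)"
  by (simp add: conc_def)

lemma Cs_decomp:
  assumes n: "n \<ge> 1"
  shows "Cs k n = (\<lambda>j. conc k j n) ` {..<k} \<union> Cp k n"
    and "(\<lambda>j. conc k j n) ` {..<k} \<inter> Cp k n = {}"
    and "inj_on (\<lambda>j. conc k j n) {..<k}"
proof -
  show "Cs k n = (\<lambda>j. conc k j n) ` {..<k} \<union> Cp k n"
  proof (rule set_eqI, rule iffI)
    fix cs assume cs: "cs \<in> Cs k n"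
    show "cs \<in> (\<lambda>j. conc k j n) ` {..<k} \<union> Cp k n"
    proof (cases "\<forall>i\<in>set cs. i < n")
      case True then show ?thesis using cs by (auto simp: Cs_def Cp_def)
    next
      case False
      then obtain j where j: "j < length cs" "cs ! j \<ge> n" by (auto simp: in_set_conv_nth)
      have s: "sum_list (cs[j := 0]) + cs ! j = n" using sum_list_update_nat[of j "cs" 0] j cs
        by (simp add: Cs_def)
      then have ij: "cs ! j = n" and z: "sum_list (cs[j := 0]) = 0" using j by auto
      have "cs = conc k j n"
      proof (rule nth_equalityI)
        show "length cs = length (conc k j n)" using cs by (simp add: Cs_def conc_def)
        fix i assume i: "i < length cs"
        show "cs ! i = conc k j n ! i"
        proof (cases "i = j")
          case True then show ?thesis using ij i cs by (simp add: conc_def Cs_def)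
        next
          case False
          have "cs[j:=0] ! i \<in> set (cs[j := 0])" using i by simp
          then have "cs[j:=0] ! i = 0" using z by (simp add: sum_list_eq_0_iff)
          then show ?thesis using False i cs by (simp add: conc_def Cs_def)
        qed
      qed
      then show ?thesis using j cs by (auto simp: Cs_def)
    qed
  next
    fix cs assume "cs \<in> (\<lambda>j. conc k j n) ` {..<k} \<union> Cp k n"
    then show "cs \<in> Cs k n" by (auto simp: Cs_def Cp_def sum_list_conc[unfolded conc_def] conc_def)
  qed
  show "(\<lambda>j. conc k j n) ` {..<k} \<inter> Cp k n = {}"
  proof -
    have "conc k j n \<notin> Cp k n" if "j < k" for j
    proof -
      have "conc k j n ! j = n" using that by (simp add: conc_def)
      moreover have "conc k j n ! j \<in> set (conc k j n)" using that by (intro nth_mem) (simp add: conc_def)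
      ultimately show ?thesis by (auto simp: Cp_def)
    qed
    then show ?thesis by auto
  qed
  show "inj_on (\<lambda>j. conc k j n) {..<k}"
  proof
    fix a b assume a: "a \<in> {..<k}" and b: "b \<in> {..<k}" and e: "conc k a n = conc k b n"
    have "conc k a n ! a = n" using a by (simp add: conc_def)
    moreover have "conc k b n ! a = (if a = b then n else 0)" using a b by (simp add: conc_def)
    ultimately show "a = b" using e n by (auto split: if_splits)
  qed
qed

lemma sum_Cs:
  assumes "n \<ge> 1"
  shows "(\<Sum>cs\<in>Cs k n. F cs) = (\<Sum>j<k. F (conc k j n)) + (\<Sum>cs\<in>Cp k n. F cs)"
proof -
  have "(\<Sum>cs\<in>Cs k n. F cs) = (\<Sum>cs\<in>(\<lambda>j. conc k j n) ` {..<k}. F cs) + (\<Sum>cs\<in>Cp k n. F cs)"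
    unfolding Cs_decomp(1)[OF assms] by (rule sum.union_disjoint) (auto simp: finite_Cp Cs_decomp(2)[OF assms])
  also have "(\<Sum>cs\<in>(\<lambda>j. conc k j n) ` {..<k}. F cs) = (\<Sum>j<k. F (conc k j n))"
    by (rule sum.reindex[OF Cs_decomp(3)[OF assms], unfolded comp_def])
  finally show ?thesis .
qed

lemma Cs_0: "Cs k 0 = {replicate k 0}"
  by (auto simp: Cs_def sum_list_eq_0_iff intro: replicate_eqI)

lemma Cp_1: "Cp k 1 = {}"
proof -
  have "False" if "cs \<in> Cp k 1" for cs
  proof -
    have "\<forall>i\<in>set cs. i = 0" using that by (auto simp: Cp_def)
    then have "sum_list cs = 0" by (simp add: sum_list_eq_0_iff)
    then show False using that by (simp add: Cp_def del: sum_list_eq_0_iff)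
  qed
  then show ?thesis by blast
qed

lemma graft_repl_upd: "j < k \<Longrightarrow> graft ((replicate k None)[j := x]) = x"
proof -
  assume j: "j < k"
  have "(replicate k None)[j := x] = replicate j None @ x # replicate (k - j - 1) None"
    using j by (intro nth_equalityI) (auto simp: nth_append nth_list_update)
  then have "filter (\<lambda>S. S \<noteq> None) ((replicate k None)[j := x]) = filter (\<lambda>S. S \<noteq> None) [x]"
    by simp
  then show ?thesis by (metis graft_filter graft_single)
qed

lemma gs_single:
  fixes h :: "'a::comm_semiring_1 series"
  assumes j: "j < k"
  shows "graft_series ((replicate k oneP)[j := h]) S = h S"
proof -
  define fs where "fs = (replicate k (oneP :: 'a series))[j := h]"
  define L where "L = {Ss. length Ss = length fs \<and> graft Ss = S}"
  define S0 where "S0 = (replicate k None)[j := S]"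
  define w where "w Ss = (\<Prod>i<length fs. (fs!i) (Ss!i))" for Ss
  have lf: "length fs = k" by (simp add: fs_def)
  have S0L: "S0 \<in> L" using j by (simp add: L_def S0_def lf graft_repl_upd)
  have w0: "w S0 = h S"
  proof -
    have "w S0 = (fs!j) (S0!j) * (\<Prod>i\<in>{..<k}-{j}. (fs!i) (S0!i))"
      unfolding w_def lf using j by (simp add: prod.remove[of "{..<k}" j])
    also have "(\<Prod>i\<in>{..<k}-{j}. (fs!i) (S0!i)) = 1"
      by (rule prod.neutral) (auto simp: fs_def S0_def oneP_def)
    finally show ?thesis using j by (simp add: fs_def S0_def)
  qed
  have others: "w Ss = 0" if Ss: "Ss \<in> L - {S0}" for Ss
  proof (rule ccontr)
    assume nz: "w Ss \<noteq> 0"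
    have len: "length Ss = k" using Ss by (simp add: L_def lf)
    have none: "Ss ! i = None" if i: "i < k" "i \<noteq> j" for i
    proof (rule ccontr)
      assume "Ss ! i \<noteq> None"
      then have "(fs!i) (Ss!i) = 0" using i by (simp add: fs_def oneP_def)
      then have "w Ss = 0" unfolding w_def using i lf by (intro prod_zero bexI[of _ i]) auto
      then show False using nz by simp
    qed
    have "Ss = (replicate k None)[j := Ss ! j]"
      using len none j by (intro nth_equalityI) (auto simp: nth_list_update)
    moreover then have "graft Ss = Ss ! j" using j graft_repl_upd by metis
    ultimately have "Ss = S0" using Ss by (simp add: L_def S0_def)
    then show False using Ss by simp
  qed
  have "graft_series fs S = (\<Sum>Ss\<in>L. w Ss)" by (simp add: graft_series_def L_def w_def)
  also have "\<dots> = w S0 + (\<Sum>Ss\<in>L - {S0}. w Ss)"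
    using S0L finite_L by (simp add: L_def sum.remove)
  also have "(\<Sum>Ss\<in>L - {S0}. w Ss) = 0" using others by simp
  finally show ?thesis using w0 by (simp add: fs_def)
qed

lemma gs_conc:
  fixes g :: "nat \<Rightarrow> 'a::comm_semiring_1 series"
  assumes "g 0 = oneP" "j < k"
  shows "graft_series (map g (conc k j n)) S = g n S"
proof -
  have "map g (conc k j n) = (replicate k oneP)[j := g n]"
    using assms by (simp add: conc_def map_update)
  then show ?thesis using gs_single[OF assms(2)] by simp
qed

lemma gs_zero:
  assumes "j < length fs" "fs ! j = (\<lambda>_. 0)"
  shows "graft_series fs S = (0::'a::comm_semiring_1)"
  unfolding graft_series_def
proof (rule sum.neutral, rule ballI)
  fix Ss assume "Ss \<in> {Ss. length Ss = length fs \<and> graft Ss = S}"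
  then show "(\<Prod>i<length fs. (fs ! i) (Ss ! i)) = 0"
    using assms by (intro prod_zero bexI[of _ j]) auto
qed

lemma gs_support:
  fixes fs :: "'a::comm_semiring_1 series list"
  assumes v: "\<And>i S. i < length fs \<Longrightarrow> (fs!i) S \<noteq> 0 \<Longrightarrow> validP S \<and> degP S = d ! i"
    and ld: "length d = length fs" and nz: "graft_series fs S \<noteq> 0"
  shows "validP S \<and> degP S = sum_list d"
proof -
  obtain Ss where Ss: "length Ss = length fs" "graft Ss = S" and w: "(\<Prod>i<length fs. (fs!i) (Ss!i)) \<noteq> 0"
    using nz unfolding graft_series_def using sum.not_neutral_contains_not_neutral by blast
  have fi: "(fs!i) (Ss!i) \<noteq> 0" if "i < length fs" for i
  proof
    assume "(fs!i) (Ss!i) = 0"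
    then have "(\<Prod>i<length fs. (fs!i) (Ss!i)) = 0" using that by (intro prod_zero bexI[of _ i]) auto
    then show False using w by simp
  qed
  have "\<forall>x\<in>set Ss. validP x"
  proof
    fix x assume "x \<in> set Ss"
    then obtain i where "i < length Ss" "x = Ss ! i" by (auto simp: in_set_conv_nth)
    then show "validP x" using fi v Ss by auto
  qed
  then have "validP S" using validP_graft Ss by blast
  moreover have "map degP Ss = d"
    using fi v Ss ld by (intro nth_equalityI) auto
  then have "degP S = sum_list d" using degP_graft Ss by metis
  ultimately show ?thesis by simp
qed



definition step :: "nat \<Rightarrow> nat \<Rightarrow> (nat \<Rightarrow> 'a::field_char_0 series) \<Rightarrow> 'a series" where
  "step k n h = (if n = 0 then oneP else if n = 1 then xP else
     (\<lambda>S. (\<Sum>cs\<in>Cp k n. graft_series (map h cs) S) / (of_nat k ^ n - of_nat k)))"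

primrec tab :: "nat \<Rightarrow> nat \<Rightarrow> nat \<Rightarrow> 'a::field_char_0 series" where
  "tab k 0 = (\<lambda>_. oneP)"
| "tab k (Suc m) = (\<lambda>n. if n < m then tab k m n else step k n (tab k m))"

definition Ef :: "nat \<Rightarrow> nat \<Rightarrow> 'a::field_char_0 series" where
  "Ef k n = tab k (Suc n) n"

lemma step_cong: "(\<And>i. i < n \<Longrightarrow> h i = h' i) \<Longrightarrow> step k n h = step k n h'"
proof -
  assume h: "\<And>i. i < n \<Longrightarrow> h i = h' i"
  have "(\<Sum>cs\<in>Cp k n. graft_series (map h cs) S) = (\<Sum>cs\<in>Cp k n. graft_series (map h' cs) S)" for S
  proof (rule sum.cong[OF refl])
    fix cs assume "cs \<in> Cp k n"
    then have "map h cs = map h' cs" using h by (intro map_cong) (auto simp: Cp_def)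
    then show "graft_series (map h cs) S = graft_series (map h' cs) S" by (rule arg_cong)
  qed
  then show ?thesis unfolding step_def by simp
qed

lemma tab_mono: "n < m \<Longrightarrow> tab k m n = tab k (Suc n) n"
proof (induction m)
  case 0 then show ?case by simp
next
  case (Suc m)
  show ?case
  proof (cases "n = m")
    case True then show ?thesis by simp
  next
    case False then show ?thesis using Suc by simp
  qed
qed

lemma Ef_step: "Ef k n = step k n (Ef k)"
proof -
  have "tab k (Suc n) n = step k n (tab k n)"
  proof (cases n)
    case 0 then show ?thesis by (simp add: step_def)
  next
    case (Suc m) then show ?thesis by simp
  qed
  also have "step k n (tab k n) = step k n (Ef k)"
    by (rule step_cong) (simp add: Ef_def tab_mono)
  finally show ?thesis by (simp add: Ef_def)
qed

lemma Ef_simps: "Ef k n = (if n = 0 then oneP else if n = 1 then xP else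
     (\<lambda>S. (\<Sum>cs\<in>Cp k n. graft_series (map (Ef k) cs) S) / (of_nat k ^ n - of_nat k)))"
  by (subst Ef_step) (simp add: step_def)

lemma Ef_0: "Ef k 0 = oneP" by (subst Ef_simps) simp
lemma Ef_1: "Ef k 1 = xP" by (subst Ef_simps) simp
lemma Ef_1': "Ef k (Suc 0) = xP" using Ef_1 by simp

lemma K_nz:
  assumes "2 \<le> k" "2 \<le> n"
  shows "(of_nat k ^ n - of_nat k :: 'a::field_char_0) \<noteq> 0"
proof -
  have "k ^ 2 \<le> k ^ n" using assms by (intro power_increasing) auto
  moreover have "k < k ^ 2" using assms by (simp add: power2_eq_square)
  ultimately have "k ^ n \<noteq> k" by linarith
  then show ?thesis by simp
qed

lemma Ef_rec:
  assumes "2 \<le> n"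
  shows "Ef k n S = (\<Sum>cs\<in>Cp k n. graft_series (map (Ef k) cs) S) / (of_nat k ^ n - of_nat k)"
  using assms by (subst Ef_simps) simp

lemma Ef_rec':
  assumes "2 \<le> k" "2 \<le> n"
  shows "(\<Sum>cs\<in>Cp k n. graft_series (map (Ef k :: nat \<Rightarrow> 'a::field_char_0 series) cs) S)
      = (of_nat k ^ n - of_nat k) * Ef k n S"
proof -
  have Knz: "(of_nat k ^ n - of_nat k :: 'a) \<noteq> 0" using K_nz[OF assms] .
  show ?thesis unfolding Ef_rec[OF assms(2), of k S] using Knz by simp
qed

lemma sum_Cs_gs:
  fixes g :: "nat \<Rightarrow> 'a::comm_semiring_1 series"
  assumes "g 0 = oneP" "n \<ge> 1"
  shows "(\<Sum>cs\<in>Cs k n. graft_series (map g cs) S) = of_nat k * g n S + (\<Sum>cs\<in>Cp k n. graft_series (map g cs) S)"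
  using sum_Cs[OF assms(2), of "\<lambda>cs. graft_series (map g cs) S" k] gs_conc[where g=g and k=k and n=n and S=S, OF assms(1)] by simp

lemma Ef_support: "(Ef k n S :: 'a::field_char_0) \<noteq> 0 \<Longrightarrow> validP S \<and> degP S = n"
proof (induction n arbitrary: S rule: less_induct)
  case (less n)
  show ?case
  proof (cases "n \<le> 1")
    case True
    then have "n = 0 \<or> n = 1" by auto
    then show ?thesis using less.prems
      by (auto simp: Ef_0 Ef_1 Ef_1' oneP_def xP_def validP_def degP_def split: if_splits)
  next
    case False
    have e: "(Ef k n S :: 'a) = (\<Sum>cs\<in>Cp k n. graft_series (map (Ef k :: nat \<Rightarrow> 'a series) cs) S) / (of_nat k ^ n - of_nat k)"
      using False by (intro Ef_rec) simp
    have "(\<Sum>cs\<in>Cp k n. graft_series (map (Ef k :: nat \<Rightarrow> 'a series) cs) S) \<noteq> 0"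
    proof
      assume "(\<Sum>cs\<in>Cp k n. graft_series (map (Ef k :: nat \<Rightarrow> 'a series) cs) S) = 0"
      then have "(Ef k n S :: 'a) = 0" using e by simp
      then show False using less.prems by simp
    qed
    then obtain cs where cs: "cs \<in> Cp k n" and nz: "graft_series (map (Ef k :: nat \<Rightarrow> 'a series) cs) S \<noteq> 0"
      using sum.not_neutral_contains_not_neutral by blast
    have "validP S \<and> degP S = sum_list cs"
    proof (rule gs_support[OF _ _ nz])
      fix i S' assume i: "i < length (map (Ef k :: nat \<Rightarrow> 'a series) cs)" and "(map (Ef k :: nat \<Rightarrow> 'a series) cs ! i) S' \<noteq> 0"
      then have "(Ef k (cs ! i) S' :: 'a) \<noteq> 0" by simp
      moreover have "cs ! i < n" using cs i by (auto simp: Cp_def)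
      ultimately show "validP S' \<and> degP S' = cs ! i" using less.IH by blast
    qed simp
    then show ?thesis using cs by (simp add: Cp_def)
  qed
qed

lemma Cs_0_gs:
  fixes g :: "nat \<Rightarrow> 'a::comm_semiring_1 series"
  assumes "g 0 = oneP" "k \<ge> 1"
  shows "(\<Sum>cs\<in>Cs k 0. graft_series (map g cs) S) = g 0 S"
proof -
  have "(replicate k 0)[0 := 0] = replicate k (0::nat)" by (cases k) auto
  then have "replicate k 0 = conc k 0 0" by (simp add: conc_def)
  then show ?thesis using gs_conc[where g=g and j=0 and k=k and n=0 and S=S, OF assms(1)] assms by (simp add: Cs_0)
qed

lemma Ef_is:
  assumes k: "2 \<le> k"
  shows "is_planar_Exp k (Ef k :: nat \<Rightarrow> 'a::field_char_0 series)"
  unfolding is_planar_Exp_def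
proof (intro conjI allI impI)
  show "Ef k 0 = oneP" by (rule Ef_0)
  show "Ef k 1 = xP" by (rule Ef_1)
  fix n
  show "\<And>S. Ef k n S \<noteq> (0::'a) \<Longrightarrow> validP S" using Ef_support by blast
  show "\<And>S. Ef k n S \<noteq> (0::'a) \<Longrightarrow> degP S = n" using Ef_support by blast
  show "(\<lambda>S. of_nat k ^ n * (Ef k n S :: 'a)) = (\<lambda>S. \<Sum>cs\<in>{cs. length cs = k \<and> sum_list cs = n}. graft_series (map (Ef k) cs) S)"
  proof
    fix S
    have C: "{cs. length cs = k \<and> sum_list cs = n} = Cs k n" by (simp add: Cs_def)
    show "of_nat k ^ n * (Ef k n S :: 'a) = (\<Sum>cs\<in>{cs. length cs = k \<and> sum_list cs = n}. graft_series (map (Ef k) cs) S)"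
      unfolding C
    proof (cases "n = 0")
      case True then show "of_nat k ^ n * (Ef k n S :: 'a) = (\<Sum>cs\<in>Cs k n. graft_series (map (Ef k) cs) S)"
        using Cs_0_gs[of "Ef k :: nat \<Rightarrow> 'a series" k S, OF Ef_0] k by simp
    next
      case False
      then have n1: "n \<ge> 1" by simp
      show "of_nat k ^ n * (Ef k n S :: 'a) = (\<Sum>cs\<in>Cs k n. graft_series (map (Ef k) cs) S)"
      proof (cases "n = 1")
        case True
        have "(\<Sum>cs\<in>Cs k n. graft_series (map (Ef k :: nat \<Rightarrow> 'a series) cs) S) = of_nat k * Ef k n S + (\<Sum>cs\<in>Cp k n. graft_series (map (Ef k :: nat \<Rightarrow> 'a series) cs) S)"
          by (rule sum_Cs_gs[where g="Ef k :: nat \<Rightarrow> 'a series", OF Ef_0 n1])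
        then show ?thesis using True by (simp only: Cp_1 sum.empty add_0_right power_one_right)
      next
        case False
        then have n2: "n \<ge> 2" using n1 by simp
        have "(\<Sum>cs\<in>Cp k n. graft_series (map (Ef k :: nat \<Rightarrow> 'a series) cs) S) = (of_nat k ^ n - of_nat k) * Ef k n S"
          by (rule Ef_rec'[OF k n2])
        then show ?thesis using sum_Cs_gs[where g="Ef k :: nat \<Rightarrow> 'a series" and n=n and k=k and S=S, OF Ef_0 n1] by (simp add: algebra_simps)
      qed
    qed
  qed
qed

lemma is_unique:
  assumes k: "2 \<le> k" and g: "is_planar_Exp k (g :: nat \<Rightarrow> 'a::field_char_0 series)"
  shows "g = Ef k"
proof
  fix n show "g n = Ef k n"
  proof (induction n rule: less_induct)
    case (less n)
    show ?case
    proof (cases "n \<le> 1")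
      case True
      then have "n = 0 \<or> n = 1" by auto
      then show ?thesis using g by (auto simp: is_planar_Exp_def Ef_0 Ef_1 Ef_1')
    next
      case False
      then have n2: "n \<ge> 2" by simp
      show ?thesis
      proof
        fix S
        have g0: "g 0 = oneP" using g by (simp add: is_planar_Exp_def)
        have eq: "of_nat k ^ n * g n S = (\<Sum>cs\<in>Cs k n. graft_series (map g cs) S)"
          using g unfolding is_planar_Exp_def Cs_def by (metis (no_types, lifting))
        have "(\<Sum>cs\<in>Cp k n. graft_series (map g cs) S) = (\<Sum>cs\<in>Cp k n. graft_series (map (Ef k :: nat \<Rightarrow> 'a series) cs) S)"
        proof (rule sum.cong[OF refl])
          fix cs assume "cs \<in> Cp k n"
          then have "map g cs = map (Ef k :: nat \<Rightarrow> 'a series) cs" using less.IH by (intro map_cong) (auto simp: Cp_def)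
          then show "graft_series (map g cs) S = graft_series (map (Ef k :: nat \<Rightarrow> 'a series) cs) S" by (rule arg_cong)
        qed
        also have "\<dots> = (of_nat k ^ n - of_nat k) * Ef k n S"
          by (rule Ef_rec'[OF k n2])
        finally have "(of_nat k ^ n - of_nat k) * g n S = (of_nat k ^ n - of_nat k) * Ef k n S"
          using eq sum_Cs_gs[where g=g and n=n and k=k and S=S, OF g0] n2 by (simp add: algebra_simps)
        then show "g n S = Ef k n S" using K_nz[OF k n2, where 'a='a] by simp
      qed
    qed
  qed
qed

lemma comp_eq: "2 \<le> k \<Longrightarrow> planar_Exp_comp k = (Ef k :: nat \<Rightarrow> 'a::field_char_0 series)"
  unfolding planar_Exp_comp_def by (rule the_equality) (rule Ef_is, assumption, rule is_unique)



lemma ddx_oneP: "ddx (oneP :: 'a::comm_semiring_1 series) = (\<lambda>_. 0)"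
  by (rule ext) (simp add: ddx_def oneP_def)

lemma ddx_xP: "ddx (xP :: 'a::comm_semiring_1 series) = oneP"
proof
  fix S :: "ptree option"
  have "ddx (xP :: 'a series) S = (\<Sum>t\<in>VN (degP S + 1). xP (Some t) * of_nat (count_list (del_leaf t) S))"
    by (rule ddx_box) simp
  also have "\<dots> = (\<Sum>t\<in>VN (degP S + 1). if t = Lf then of_nat (count_list [None] S) else 0)"
    by (rule sum.cong) (auto simp: xP_def)
  also have "\<dots> = of_nat (count_list [None] S)"
    using finite_VN by (simp add: sum.delta VN_def)
  also have "\<dots> = oneP S" by (simp add: oneP_def)
  finally show "ddx (xP :: 'a series) S = oneP S" .
qed

lemma ddx_scale: "ddx (\<lambda>S. g S * c) S' = ddx g S' * (c::'a::comm_semiring_1)"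
  unfolding ddx_def sum_distrib_right by (rule sum.cong) (auto simp: ac_simps)

lemma ddx_sum: "ddx (\<lambda>S. \<Sum>i\<in>I. G i S) S' = (\<Sum>i\<in>I. ddx (G i) S' :: 'a::comm_semiring_1)"
  unfolding ddx_def sum_distrib_right by (rule sum.swap)

lemma Ef_eq:
  assumes "2 \<le> k"
  shows "(\<Sum>cs\<in>Cs k m. graft_series (map (Ef k :: nat \<Rightarrow> 'a::field_char_0 series) cs) S) = of_nat k ^ m * Ef k m S"
proof -
  have "is_planar_Exp k (Ef k :: nat \<Rightarrow> 'a series)" by (rule Ef_is[OF assms])
  then have "(\<lambda>S. of_nat k ^ m * (Ef k m S :: 'a)) = (\<lambda>S. \<Sum>cs\<in>{cs. length cs = k \<and> sum_list cs = m}. graft_series (map (Ef k) cs) S)"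
    unfolding is_planar_Exp_def by blast
  then have "of_nat k ^ m * (Ef k m S :: 'a) = (\<Sum>cs\<in>{cs. length cs = k \<and> sum_list cs = m}. graft_series (map (Ef k) cs) S)"
    by (rule fun_cong)
  then show ?thesis by (simp add: Cs_def)
qed

lemma Ef_valid: "i < length (map (Ef k :: nat \<Rightarrow> 'a::field_char_0 series) cs) \<Longrightarrow>
   ((map (Ef k :: nat \<Rightarrow> 'a series) cs) ! i) S \<noteq> 0 \<Longrightarrow> validP S"
  using Ef_support by auto



definition Tt :: "nat \<Rightarrow> nat list \<Rightarrow> nat \<Rightarrow> ptree option \<Rightarrow> 'a::field_char_0" where
  "Tt k cs j S' = (if cs ! j = 0 then 0 else graft_series (map (Ef k) (cs[j := cs ! j - 1])) S')"

lemma sum_T_Cs: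
  assumes k: "2 \<le> k" and n: "n \<ge> 1"
  shows "(\<Sum>cs\<in>Cs k n. \<Sum>j<k. (Tt k cs j S' :: 'a::field_char_0)) = of_nat k * (of_nat k ^ (n - 1) * Ef k (n - 1) S')"
proof -
  define P where "P = {p \<in> Cs k n \<times> {..<k}. fst p ! snd p \<noteq> 0}"
  have fin: "finite (Cs k n \<times> {..<k})" using finite_Cs by simp
  have "(\<Sum>cs\<in>Cs k n. \<Sum>j<k. (Tt k cs j S' :: 'a)) = (\<Sum>p\<in>Cs k n \<times> {..<k}. Tt k (fst p) (snd p) S')"
    by (simp add: sum.cartesian_product split_def)
  also have "\<dots> = (\<Sum>p\<in>P. graft_series (map (Ef k) ((fst p)[snd p := fst p ! snd p - 1])) S')"
    unfolding P_def sum.inter_filter[OF fin] by (rule sum.cong) (auto simp: Tt_def)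
  also have "\<dots> = (\<Sum>q\<in>Cs k (n - 1) \<times> {..<k}. graft_series (map (Ef k :: nat \<Rightarrow> 'a series) (fst q)) S')"
  proof (rule sum.reindex_bij_witness[where i = "\<lambda>(cs, j). (cs[j := cs ! j + 1], j)"
                                       and j = "\<lambda>(cs, j). (cs[j := cs ! j - 1], j)"])
    fix a assume a: "a \<in> P"
    obtain cs j where aj: "a = (cs, j)" by (cases a)
    have len: "length cs = k" and s: "sum_list cs = n" and j: "j < k" and nz: "cs ! j \<noteq> 0"
      using a aj by (auto simp: P_def Cs_def)
    show "(\<lambda>(cs, j). (cs[j := cs ! j + 1], j)) ((\<lambda>(cs, j). (cs[j := cs ! j - 1], j)) a) = a"
      using aj len j nz by simp
    have "sum_list (cs[j := cs ! j - 1]) + cs ! j = sum_list cs + (cs ! j - 1)"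
      using len j by (intro sum_list_update_nat) simp
    then have "sum_list (cs[j := cs ! j - 1]) = n - 1" using s nz by simp
    then show "(\<lambda>(cs, j). (cs[j := cs ! j - 1], j)) a \<in> Cs k (n - 1) \<times> {..<k}"
      using aj len j by (simp add: Cs_def)
    show "graft_series (map (Ef k :: nat \<Rightarrow> 'a series) (fst ((\<lambda>(cs, j). (cs[j := cs ! j - 1], j)) a))) S'
        = graft_series (map (Ef k) ((fst a)[snd a := fst a ! snd a - 1])) S'"
      using aj by simp
  next
    fix b assume b: "b \<in> Cs k (n - 1) \<times> {..<k}"
    obtain cs j where bj: "b = (cs, j)" by (cases b)
    have len: "length cs = k" and s: "sum_list cs = n - 1" and j: "j < k"
      using b bj by (auto simp: Cs_def)
    show "(\<lambda>(cs, j). (cs[j := cs ! j - 1], j)) ((\<lambda>(cs, j). (cs[j := cs ! j + 1], j)) b) = b"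
      using bj len j by simp
    have "sum_list (cs[j := cs ! j + 1]) + cs ! j = sum_list cs + (cs ! j + 1)"
      using len j by (intro sum_list_update_nat) simp
    then have "sum_list (cs[j := cs ! j + 1]) = n" using s n by simp
    then show "(\<lambda>(cs, j). (cs[j := cs ! j + 1], j)) b \<in> P"
      using bj len j by (simp add: P_def Cs_def)
  qed
  also have "\<dots> = (\<Sum>cs\<in>Cs k (n - 1). \<Sum>j<k. graft_series (map (Ef k :: nat \<Rightarrow> 'a series) cs) S')"
    by (simp add: sum.cartesian_product split_def del: sum_constant)
  also have "\<dots> = of_nat k * (\<Sum>cs\<in>Cs k (n - 1). graft_series (map (Ef k :: nat \<Rightarrow> 'a series) cs) S')"
    by (simp add: sum_distrib_left mult.commute)
  also have "\<dots> = of_nat k * (of_nat k ^ (n - 1) * Ef k (n - 1) S')"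
    using Ef_eq[OF k, where 'a='a and m="n - 1" and S=S'] by simp
  finally show ?thesis .
qed

lemma sum_T_conc:
  assumes k: "2 \<le> k" and n: "n \<ge> 1" and j0: "j0 < k"
  shows "(\<Sum>j<k. (Tt k (conc k j0 n) j S' :: 'a::field_char_0)) = Ef k (n - 1) S'"
proof -
  have "(Tt k (conc k j0 n) j S' :: 'a) = (if j = j0 then Ef k (n - 1) S' else 0)" if j: "j < k" for j
  proof (cases "j = j0")
    case True
    have "(conc k j0 n)[j0 := n - 1] = conc k j0 (n - 1)" by (simp add: conc_def)
    then show ?thesis using True n j0 gs_conc[where g="Ef k :: nat \<Rightarrow> 'a series", OF Ef_0 j0]
      by (simp add: Tt_def conc_nth)
  next
    case False then show ?thesis using j j0 by (simp add: Tt_def conc_nth)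
  qed
  then have "(\<Sum>j<k. (Tt k (conc k j0 n) j S' :: 'a)) = (\<Sum>j<k. if j = j0 then Ef k (n - 1) S' else 0)"
    by (intro sum.cong) auto
  also have "\<dots> = Ef k (n - 1) S'" using j0 by (simp add: sum.delta)
  finally show ?thesis .
qed

lemma main_deriv:
  assumes k: "2 \<le> k"
  shows "n \<ge> 1 \<Longrightarrow> ddx (Ef k n :: 'a::field_char_0 series) = Ef k (n - 1)"
proof (induction n rule: less_induct)
  case (less n)
  show ?case
  proof (cases "n = 1")
    case True then show ?thesis by (simp add: Ef_1 Ef_1' Ef_0 ddx_xP)
  next
    case False
    then have n2: "n \<ge> 2" using less.prems by simp
    define K where "K = (of_nat k ^ n - of_nat k :: 'a)"
    have Knz: "K \<noteq> 0" unfolding K_def by (rule K_nz[OF k n2])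
    show ?thesis
    proof
      fix S'
      have "ddx (Ef k n :: 'a series) S' * K = ddx (\<lambda>S. (Ef k n S :: 'a) * K) S'"
        by (rule ddx_scale[symmetric])
      also have "(\<lambda>S. (Ef k n S :: 'a) * K) = (\<lambda>S. \<Sum>cs\<in>Cp k n. graft_series (map (Ef k :: nat \<Rightarrow> 'a series) cs) S)"
      proof (rule ext)
        fix S
        show "(Ef k n S :: 'a) * K = (\<Sum>cs\<in>Cp k n. graft_series (map (Ef k :: nat \<Rightarrow> 'a series) cs) S)"
          using Ef_rec'[OF k n2, where 'a='a and S=S] by (simp add: K_def mult.commute)
      qed
      also have "ddx (\<lambda>S. \<Sum>cs\<in>Cp k n. graft_series (map (Ef k :: nat \<Rightarrow> 'a series) cs) S) S'
          = (\<Sum>cs\<in>Cp k n. ddx (graft_series (map (Ef k :: nat \<Rightarrow> 'a series) cs)) S')"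
        by (rule ddx_sum)
      also have "\<dots> = (\<Sum>cs\<in>Cp k n. \<Sum>j<k. (Tt k cs j S' :: 'a))"
      proof (rule sum.cong[OF refl])
        fix cs assume cs: "cs \<in> Cp k n"
        have len: "length cs = k" using cs by (simp add: Cp_def)
        have "ddx (graft_series (map (Ef k :: nat \<Rightarrow> 'a series) cs)) S'
            = (\<Sum>j<length (map (Ef k :: nat \<Rightarrow> 'a series) cs).
                 graft_series ((map (Ef k :: nat \<Rightarrow> 'a series) cs)[j := ddx ((map (Ef k :: nat \<Rightarrow> 'a series) cs) ! j)]) S')"
          by (rule deriv_graft) (rule Ef_valid)
        also have "\<dots> = (\<Sum>j<k. (Tt k cs j S' :: 'a))"
        proof (rule sum.cong)
          show "{..<length (map (Ef k :: nat \<Rightarrow> 'a series) cs)} = {..<k}" using len by simp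
          fix j assume "j \<in> {..<k}"
          then have j: "j < k" by simp
          show "graft_series ((map (Ef k :: nat \<Rightarrow> 'a series) cs)[j := ddx ((map (Ef k :: nat \<Rightarrow> 'a series) cs) ! j)]) S'
              = Tt k cs j S'"
          proof (cases "cs ! j = 0")
            case True
            have "ddx ((map (Ef k :: nat \<Rightarrow> 'a series) cs) ! j) = (\<lambda>_. 0)"
              using True j len by (simp add: Ef_0 ddx_oneP)
            then show ?thesis using True j len by (simp add: Tt_def gs_zero)
          next
            case False
            have "cs ! j \<in> set cs" using j len by simp
            then have lt: "cs ! j < n" using cs by (auto simp: Cp_def)
            have "ddx ((map (Ef k :: nat \<Rightarrow> 'a series) cs) ! j) = Ef k (cs ! j - 1)"
              using less.IH[OF lt] False j len by simp
            then have "(map (Ef k :: nat \<Rightarrow> 'a series) cs)[j := ddx ((map (Ef k :: nat \<Rightarrow> 'a series) cs) ! j)]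
                = map (Ef k) (cs[j := cs ! j - 1])"
              by (simp add: map_update)
            then show ?thesis using False by (simp add: Tt_def)
          qed
        qed
        finally show "ddx (graft_series (map (Ef k :: nat \<Rightarrow> 'a series) cs)) S' = (\<Sum>j<k. (Tt k cs j S' :: 'a))" .
      qed
      also have "\<dots> = K * Ef k (n - 1) S'"
      proof -
        have "(\<Sum>cs\<in>Cs k n. \<Sum>j<k. (Tt k cs j S' :: 'a))
            = (\<Sum>j0<k. \<Sum>j<k. (Tt k (conc k j0 n) j S' :: 'a)) + (\<Sum>cs\<in>Cp k n. \<Sum>j<k. (Tt k cs j S' :: 'a))"
          using less.prems by (rule sum_Cs)
        also have "(\<Sum>j0<k. \<Sum>j<k. (Tt k (conc k j0 n) j S' :: 'a)) = (\<Sum>j0<k. Ef k (n - 1) S')"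
          by (rule sum.cong[OF refl]) (simp add: sum_T_conc[OF k less.prems, where 'a='a])
        also have "\<dots> = of_nat k * Ef k (n - 1) S'" by simp
        finally have A: "(\<Sum>cs\<in>Cs k n. \<Sum>j<k. (Tt k cs j S' :: 'a))
            = of_nat k * Ef k (n - 1) S' + (\<Sum>cs\<in>Cp k n. \<Sum>j<k. (Tt k cs j S' :: 'a))" .
        have B: "(\<Sum>cs\<in>Cs k n. \<Sum>j<k. (Tt k cs j S' :: 'a)) = of_nat k * (of_nat k ^ (n - 1) * Ef k (n - 1) S')"
          by (rule sum_T_Cs[OF k less.prems])
        have "(\<Sum>cs\<in>Cp k n. \<Sum>j<k. (Tt k cs j S' :: 'a))
            = of_nat k * (of_nat k ^ (n - 1) * Ef k (n - 1) S') - of_nat k * Ef k (n - 1) S'"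
          using A B by (simp add: algebra_simps)
        also have "of_nat k * (of_nat k ^ (n - 1) * (Ef k (n - 1) S' :: 'a)) = of_nat k ^ n * Ef k (n - 1) S'"
          using n2 by (cases n) (simp_all add: mult.assoc)
        finally show ?thesis by (simp add: K_def algebra_simps)
      qed
      finally have "ddx (Ef k n :: 'a series) S' * K = K * Ef k (n - 1) S'" .
      then show "ddx (Ef k n :: 'a series) S' = Ef k (n - 1) S'" using Knz by (simp add: mult.commute)
    qed
  qed
qed

theorem proposition6p2:
  fixes k :: nat
  assumes "2 \<le> k"
  shows "ddx (planar_Exp k :: 'a::field_char_0 series) = planar_Exp k
    \<and> (\<forall>n\<ge>1. ddx (planar_Exp_comp k n :: 'a series) = planar_Exp_comp k (n - 1))"
proof
  have ce: "planar_Exp_comp k = (Ef k :: nat \<Rightarrow> 'a series)" by (rule comp_eq[OF assms])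
  show "\<forall>n\<ge>1. ddx (planar_Exp_comp k n :: 'a series) = planar_Exp_comp k (n - 1)"
    using main_deriv[OF assms, where 'a='a] ce by simp
  show "ddx (planar_Exp k :: 'a series) = planar_Exp k"
  proof
    fix S'
    have "ddx (planar_Exp k :: 'a series) S' = ddx (Ef k (degP S' + 1) :: 'a series) S'"
      unfolding ddx_def
      by (rule sum.cong) (auto simp: planar_Exp_def ce degP_def)
    also have "\<dots> = Ef k (degP S') S'" using main_deriv[OF assms, where 'a='a, of "degP S' + 1"] by simp
    also have "\<dots> = planar_Exp k S'" by (simp add: planar_Exp_def ce)
    finally show "ddx (planar_Exp k :: 'a series) S' = planar_Exp k S'" .
  qed
qed


end
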